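(* For any $F\in\mathscr{F}_{\mathrm{opt}}\cap\mathscr{F}_2$, there exists $i\in\mathcal{R}_F$ such that $|\mathcal{P}^2_{F,i}|=4$.
   Context: $\mathcal{S}$ is a finite source alphabet with $|\mathcal{S}|\ge 2$ and $\mathcal{C}=\{0,1\}$; $\mathcal{A}^k,\mathcal{A}^{\ast},\mathcal{A}^{+}$ are sequences of length $k$, finite, positive finite length; $\lambda$ empty sequence; $\preceq$ prefix, $\prec$ proper prefix; $\mathrm{suff}(x_1\cdots x_n)=x_2\cdots x_n$. A code-tuple $F$ with $m\ge1$ code tables consists of maps $f_i:\mathcal{S}\to\mathcal{C}^{\ast}$ and $\tau_i:\mathcal{S}\to\{0,\dots,m-1\}$, $i\in[F]=\{0,\dots,m-1\}$. $f_i^{\ast}(\lambda)=\lambda$, $\tau_i^{\ast}(\lambda)=i$, and for $\pmb{x}=x_1\cdots x_n\ne\lambda$, $f_i^{\ast}(\pmb{x})=f_i(x_1)f^{\ast}_{\tau_i(x_1)}(\mathrm{suff}(\pmb{x}))$, $\tau_i^{\ast}(\pmb{x})=\tau^{\ast}_{\tau_i(x_1)}(\mathrm{suff}(\pmb{x}))$. For integer $k\ge0$, $\pmb{b}\in\mathcal{C}^{\ast}$: $\mathcal{P}^k_{F,i}(\pmb{b})$ is the set of $\pmb{c}\in\mathcal{C}^k$ such that some $\pmb{x}=x_1\cdots x_n\in\mathcal{S}^{+}$ has $f_i^{\ast}(\pmb{x})\succeq\pmb{b}\pmb{c}$ and $f_i(x_1)\succeq\pmb{b}$; $\bar{\mathcal{P}}^k_{F,i}(\pmb{b})$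 the same with $f_i(x_1)\succ\pmb{b}$; $\mathcal{P}^k_{F,i}=\mathcal{P}^k_{F,i}(\lambda)$. $F\in\mathscr{F}_{2\text{-}\mathrm{dec}}$ if $\mathcal{P}^2_{F,\tau_i(s)}\cap\bar{\mathcal{P}}^2_{F,i}(f_i(s))=\emptyset$ for all $i,s$, and $\mathcal{P}^2_{F,\tau_i(s)}\cap\mathcal{P}^2_{F,\tau_i(s')}=\emptyset$ whenever $s\ne s'$, $f_i(s)=f_i(s')$. $F\in\mathscr{F}_{\mathrm{ext}}$ if $\mathcal{P}^1_{F,i}\ne\emptyset$ for all $i$. Fix $\mu:\mathcal{S}\to(0,1]$ with $\sum_s\mu(s)=1$; $Q(F)$ has entries $Q_{i,j}(F)=\sum_{s:\tau_i(s)=j}\mu(s)$; $F\in\mathscr{F}_{\mathrm{reg}}$ if $\pmb{\pi}Q(F)=\pmb{\pi}$, $\sum_i\pi_i=1$ has a unique solution $\pmb{\pi}(F)$; then $L(F)=\sum_i\pi_i(F)\sum_s|f_i(s)|\mu(s)$. $\mathscr{F}_0=\mathscr{F}_{\mathrm{reg}}\cap\mathscr{F}_{\mathrm{ext}}\cap\mathscr{F}_{2\text{-}\mathrm{dec}}$; $\mathscr{F}_{\mathrm{opt}}$ is the set of $F\in\mathscr{F}_0$ with $L(F)\le L(F')$ for all $F'\in\mathscr{F}_0$. $\mathscr{F}_2=\{F\in\mathscr{F}_{\mathrm{reg}}\cap\mathscr{F}_{2\text{-}\mathrm{dec}}:|\mathcal{P}^2_{F,i}|\ge3\ \forall i\in[F]\}$.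 $\mathcal{R}_F=\{i\in[F]:\text{for every }j\in[F]\text{ there is }\pmb{x}\in\mathcal{S}^{\ast}\text{ with }\tau^{\ast}_j(\pmb{x})=i\}$. *)

theory Defs
  imports Complex_Main "HOL-Library.Sublist"
begin

text \<open>A code-tuple with m = ntab F code tables f_i = ftab F i, tau_i = ttab F i
  (only indices i < m matter). Code alphabet C = {0,1} is modelled by bool.\<close>
record 's ctuple =
  ntab :: nat
  ftab :: "nat \<Rightarrow> 's \<Rightarrow> bool list"
  ttab :: "nat \<Rightarrow> 's \<Rightarrow> nat"

definition code_tuple :: "'s ctuple \<Rightarrow> bool" where
  "code_tuple F \<longleftrightarrow> ntab F \<ge> 1 \<and> (\<forall>i<ntab F. \<forall>s. ttab F i s < ntab F)"

fun fstar :: "'s ctuple \<Rightarrow> nat \<Rightarrow> 's list \<Rightarrow> bool list" where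
  "fstar F i [] = []"
| "fstar F i (x # xs) = ftab F i x @ fstar F (ttab F i x) xs"

fun tstar :: "'s ctuple \<Rightarrow> nat \<Rightarrow> 's list \<Rightarrow> nat" where
  "tstar F i [] = i"
| "tstar F i (x # xs) = tstar F (ttab F i x) xs"

definition Pset :: "'s ctuple \<Rightarrow> nat \<Rightarrow> nat \<Rightarrow> bool list \<Rightarrow> bool list set" where
  "Pset F k i b = {c. length c = k \<and> (\<exists>x. x \<noteq> [] \<and> prefix (b @ c) (fstar F i x)
       \<and> prefix b (ftab F i (hd x)))}"

definition Pbar :: "'s ctuple \<Rightarrow> nat \<Rightarrow> nat \<Rightarrow> bool list \<Rightarrow> bool list set" where
  "Pbar F k i b = {c. length c = k \<and> (\<exists>x. x \<noteq> [] \<and> prefix (b @ c) (fstar F i x)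
       \<and> strict_prefix b (ftab F i (hd x)))}"

definition two_dec :: "'s ctuple \<Rightarrow> bool" where
  "two_dec F \<longleftrightarrow> (\<forall>i<ntab F. \<forall>s.
      Pset F 2 (ttab F i s) [] \<inter> Pbar F 2 i (ftab F i s) = {}) \<and>
    (\<forall>i<ntab F. \<forall>s s'. s \<noteq> s' \<and> ftab F i s = ftab F i s' \<longrightarrow>
      Pset F 2 (ttab F i s) [] \<inter> Pset F 2 (ttab F i s') [] = {})"

definition ext_code :: "'s ctuple \<Rightarrow> bool" where
  "ext_code F \<longleftrightarrow> (\<forall>i<ntab F. Pset F 1 i [] \<noteq> {})"

definition Qmat :: "('s \<Rightarrow> real) \<Rightarrow> 's ctuple \<Rightarrow> nat \<Rightarrow> nat \<Rightarrow> real" where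
  "Qmat \<mu> F i j = (\<Sum>s\<in>{s. ttab F i s = j}. \<mu> s)"

definition stationary :: "('s \<Rightarrow> real) \<Rightarrow> 's ctuple \<Rightarrow> (nat \<Rightarrow> real) \<Rightarrow> bool" where
  "stationary \<mu> F p \<longleftrightarrow> (\<forall>j<ntab F. (\<Sum>i<ntab F. p i * Qmat \<mu> F i j) = p j)
     \<and> (\<Sum>i<ntab F. p i) = 1 \<and> (\<forall>i\<ge>ntab F. p i = 0)"

definition regular :: "('s \<Rightarrow> real) \<Rightarrow> 's ctuple \<Rightarrow> bool" where
  "regular \<mu> F \<longleftrightarrow> (\<exists>!p. stationary \<mu> F p)"

definition statdist :: "('s \<Rightarrow> real) \<Rightarrow> 's ctuple \<Rightarrow> nat \<Rightarrow> real" where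
  "statdist \<mu> F = (THE p. stationary \<mu> F p)"

definition avglen :: "('s::finite \<Rightarrow> real) \<Rightarrow> 's ctuple \<Rightarrow> real" where
  "avglen \<mu> F = (\<Sum>i<ntab F. statdist \<mu> F i * (\<Sum>s\<in>UNIV. real (length (ftab F i s)) * \<mu> s))"

definition F0 :: "('s \<Rightarrow> real) \<Rightarrow> 's ctuple set" where
  "F0 \<mu> = {F. code_tuple F \<and> regular \<mu> F \<and> ext_code F \<and> two_dec F}"

definition Fopt :: "('s::finite \<Rightarrow> real) \<Rightarrow> 's ctuple set" where
  "Fopt \<mu> = {F \<in> F0 \<mu>. \<forall>F' \<in> F0 \<mu>. avglen \<mu> F \<le> avglen \<mu> F'}"

definition F2 :: "('s \<Rightarrow> real) \<Rightarrow> 's ctuple set" where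
  "F2 \<mu> = {F. code_tuple F \<and> regular \<mu> F \<and> two_dec F \<and>
              (\<forall>i<ntab F. card (Pset F 2 i []) \<ge> 3)}"

definition Rset :: "'s ctuple \<Rightarrow> nat set" where
  "Rset F = {i. i < ntab F \<and> (\<forall>j<ntab F. \<exists>x. tstar F j x = i)}"

end

theory Submission imports Defs "Jordan_Normal_Form.Determinant" begin

definition stoch :: "nat \<Rightarrow> (nat \<Rightarrow> nat \<Rightarrow> real) \<Rightarrow> bool" where
  "stoch n P \<longleftrightarrow> (\<forall>i<n. \<forall>j<n. 0 \<le> P i j) \<and> (\<forall>i<n. (\<Sum>j<n. P i j) = 1)"

definition invm :: "nat \<Rightarrow> (nat \<Rightarrow> nat \<Rightarrow> real) \<Rightarrow> (nat \<Rightarrow> real) \<Rightarrow> bool" where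
  "invm n P v \<longleftrightarrow> (\<forall>j<n. (\<Sum>i<n. v i * P i j) = v j)"

lemma stoch_sum_eq:
  assumes "stoch n P" and le: "\<And>j. j<n \<Longrightarrow> w j \<le> (\<Sum>i<n. w i * P i j)"
  shows "j < n \<Longrightarrow> w j = (\<Sum>i<n. w i * P i j)"
proof -
  have "(\<Sum>j<n. (\<Sum>i<n. w i * P i j)) = (\<Sum>i<n. w i * (\<Sum>j<n. P i j))"
    by (subst sum.swap) (simp add: sum_distrib_left)
  also have "\<dots> = (\<Sum>i<n. w i)" using assms(1) unfolding stoch_def by simp
  finally have "(\<Sum>j<n. (\<Sum>i<n. w i * P i j) - w j) = 0" by (simp add: sum_subtractf)
  moreover have "\<forall>j\<in>{..<n}. 0 \<le> (\<Sum>i<n. w i * P i j) - w j" using le by simp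
  ultimately have "\<forall>j\<in>{..<n}. (\<Sum>i<n. w i * P i j) - w j = 0"
    using sum_nonneg_eq_0_iff[of "{..<n}" "\<lambda>j. (\<Sum>i<n. w i * P i j) - w j"] by simp
  then show "j < n \<Longrightarrow> w j = (\<Sum>i<n. w i * P i j)" by simp
qed

lemma stoch_abs_inv:
  assumes "stoch n P" "invm n P v"
  shows "invm n P (\<lambda>i. \<bar>v i\<bar>)"
proof -
  have le: "\<bar>v j\<bar> \<le> (\<Sum>i<n. \<bar>v i\<bar> * P i j)" if "j<n" for j
  proof -
    have "\<bar>v j\<bar> = \<bar>\<Sum>i<n. v i * P i j\<bar>" using assms(2) that unfolding invm_def by simp
    also have "\<dots> \<le> (\<Sum>i<n. \<bar>v i * P i j\<bar>)" by (rule sum_abs)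
    also have "\<dots> = (\<Sum>i<n. \<bar>v i\<bar> * P i j)"
      using assms(1) that unfolding stoch_def by (intro sum.cong) (auto simp: abs_mult)
    finally show ?thesis .
  qed
  show ?thesis unfolding invm_def
  proof (intro allI impI)
    fix j assume "j<n"
    from stoch_sum_eq[OF assms(1), of "\<lambda>i. \<bar>v i\<bar>", OF le this] show "(\<Sum>i<n. \<bar>v i\<bar> * P i j) = \<bar>v j\<bar>" by simp
  qed
qed

lemma stoch_exists:
  assumes "stoch n P" "n \<ge> 1"
  shows "\<exists>v. invm n P v \<and> (\<forall>i. 0 \<le> v i) \<and> (\<Sum>i<n. v i) = 1 \<and> (\<forall>i\<ge>n. v i = 0)"
proof -
  define B :: "real mat" where "B = mat n n (\<lambda>(i,j). P i j - (if i = j then 1 else 0))"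
  define one :: "real vec" where "one = vec n (\<lambda>_. 1)"
  have B: "B \<in> carrier_mat n n" unfolding B_def by simp
  have h1: "B *\<^sub>v one = 0\<^sub>v n"
  proof (rule eq_vecI)
    show "dim_vec (B *\<^sub>v one) = dim_vec (0\<^sub>v n :: real vec)" unfolding B_def by simp
    fix i assume i: "i < dim_vec (0\<^sub>v n :: real vec)"
    then have i': "i < n" by simp
    have "(B *\<^sub>v one) $ i = (\<Sum>j<n. P i j - (if i = j then 1 else 0))"
      using i' unfolding B_def one_def by (simp add: mult_mat_vec_def scalar_prod_def row_def atLeast0LessThan)
    also have "\<dots> = (\<Sum>j<n. P i j) - (\<Sum>j<n. (if i = j then 1 else 0))"
      by (rule sum_subtractf)
    also have "\<dots> = 0" using assms(1) i' unfolding stoch_def by simp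
    finally show "(B *\<^sub>v one) $ i = 0\<^sub>v n $ i" using i' by simp
  qed
  have h2: "one \<noteq> 0\<^sub>v n"
  proof
    assume "one = 0\<^sub>v n"
    then have "one $ 0 = (0\<^sub>v n :: real vec) $ 0" by simp
    with assms(2) show False unfolding one_def by simp
  qed
  have h3: "one \<in> carrier_vec n" unfolding one_def by simp
  have "det B = 0" unfolding det_0_iff_vec_prod_zero_field[OF B]
    using h1 h2 h3 by blast
  then have dT: "det (transpose_mat B) = 0" using det_transpose[OF B] by simp
  have BT: "transpose_mat B \<in> carrier_mat n n" using B by simp
  have "\<exists>u. u \<in> carrier_vec n \<and> u \<noteq> 0\<^sub>v n \<and> transpose_mat B *\<^sub>v u = 0\<^sub>v n"
    using dT unfolding det_0_iff_vec_prod_zero_field[OF BT] .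
  then obtain u where u: "u \<in> carrier_vec n" "u \<noteq> 0\<^sub>v n" "transpose_mat B *\<^sub>v u = 0\<^sub>v n"
    by blast
  define v where "v i = (if i < n then u $ i else 0)" for i
  have inv: "invm n P v" unfolding invm_def
  proof (intro allI impI)
    fix j assume j: "j < n"
    have "(transpose_mat B *\<^sub>v u) $ j = 0" using u(3) j by simp
    moreover have "(transpose_mat B *\<^sub>v u) $ j = (\<Sum>i<n. (P i j - (if i = j then 1 else 0)) * u $ i)"
      using j u(1) unfolding B_def
      by (simp add: mult_mat_vec_def scalar_prod_def row_def atLeast0LessThan)
    ultimately have "(\<Sum>i<n. (P i j - (if i = j then 1 else 0)) * u $ i) = 0"
      by simp
    moreover have "(\<Sum>i<n. (P i j - (if i = j then 1 else 0)) * u $ i) = (\<Sum>i<n. P i j * u $ i - (if i = j then u $ i else 0))"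
      by (intro sum.cong) (auto simp: left_diff_distrib)
    ultimately have "(\<Sum>i<n. P i j * u $ i - (if i = j then u $ i else 0)) = 0"
      by simp
    then have "(\<Sum>i<n. P i j * u $ i) - (\<Sum>i<n. (if i = j then u $ i else 0)) = 0"
      by (simp add: sum_subtractf)
    moreover have "(\<Sum>i<n. (if i = j then u $ i else 0)) = u $ j"
      using j by (simp add: sum.delta')
    ultimately have "(\<Sum>i<n. P i j * u $ i) = u $ j" by simp
    moreover have "(\<Sum>i<n. v i * P i j) = (\<Sum>i<n. P i j * u $ i)"
      unfolding v_def by (intro sum.cong) auto
    ultimately show "(\<Sum>i<n. v i * P i j) = v j" using j unfolding v_def by simp
  qed
  have "\<exists>i<n. v i \<noteq> 0"
  proof (rule ccontr)
    assume "\<not> ?thesis"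
    then have "\<And>i. i < n \<Longrightarrow> u $ i = 0" unfolding v_def by auto
    then have "u = 0\<^sub>v n" using u(1) by (intro eq_vecI) auto
    with u(2) show False by simp
  qed
  then obtain i0 where i0: "i0 < n" "v i0 \<noteq> 0" by auto
  define w where "w i = \<bar>v i\<bar>" for i
  have invw: "invm n P w" using stoch_abs_inv[OF assms(1) inv] unfolding w_def .
  have S: "(\<Sum>i<n. w i) > 0"
  proof -
    have "(\<Sum>i<n. w i) \<ge> w i0" using i0 by (intro member_le_sum) (auto simp: w_def)
    moreover have "w i0 > 0" using i0 by (simp add: w_def)
    ultimately show ?thesis by simp
  qed
  define z where "z i = w i / (\<Sum>i<n. w i)" for i
  have "invm n P z" unfolding invm_def
  proof (intro allI impI)
    fix j assume j: "j < n"
    have "(\<Sum>i<n. z i * P i j) = (\<Sum>i<n. w i * P i j) / (\<Sum>i<n. w i)"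
      unfolding z_def sum_divide_distrib by (intro sum.cong) auto
    also have "\<dots> = z j" using invw j unfolding invm_def z_def by simp
    finally show "(\<Sum>i<n. z i * P i j) = z j" .
  qed
  moreover have "(\<Sum>i<n. z i) = 1" using S unfolding z_def sum_divide_distrib[symmetric] by simp
  moreover have "\<forall>i. 0 \<le> z i" unfolding z_def w_def using S by simp
  moreover have "\<forall>i\<ge>n. z i = 0" unfolding z_def w_def v_def by simp
  ultimately show ?thesis by blast
qed

lemma tstar_append: "tstar G k (x @ y) = tstar G (tstar G k x) y"
  by (induction x arbitrary: k) auto

lemma Qmat_alt:
  fixes \<mu> :: "'a::finite \<Rightarrow> real"
  shows "Qmat \<mu> G i j = (\<Sum>s\<in>UNIV. if ttab G i s = j then \<mu> s else 0)"
  unfolding Qmat_def by (simp add: sum.inter_filter[symmetric])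

lemma Qmat_ge:
  fixes \<mu> :: "'a::finite \<Rightarrow> real"
  assumes "\<And>s. 0 < \<mu> s"
  shows "\<mu> s \<le> Qmat \<mu> G i (ttab G i s)"
  unfolding Qmat_def using assms by (intro member_le_sum) (auto intro: less_imp_le)

lemma Qmat_nonneg:
  fixes \<mu> :: "'a::finite \<Rightarrow> real"
  assumes "\<And>s. 0 < \<mu> s"
  shows "0 \<le> Qmat \<mu> G i j"
  unfolding Qmat_def using assms by (intro sum_nonneg) (auto intro: less_imp_le)

lemma Qmat_zero:
  fixes \<mu> :: "'a::finite \<Rightarrow> real"
  assumes "\<And>s. ttab G i s \<noteq> j"
  shows "Qmat \<mu> G i j = 0"
  unfolding Qmat_def using assms by simp

lemma stoch_Qmat:
  fixes \<mu> :: "'a::finite \<Rightarrow> real"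
  assumes ct: "code_tuple G" and pos: "\<And>s. 0 < \<mu> s" and sum1: "(\<Sum>s\<in>UNIV. \<mu> s) = 1"
  shows "stoch (ntab G) (Qmat \<mu> G)"
  unfolding stoch_def
proof (intro conjI allI impI)
  fix i j assume "i < ntab G" "j < ntab G"
  show "0 \<le> Qmat \<mu> G i j" using Qmat_nonneg pos by blast
next
  fix i assume i: "i < ntab G"
  have "(\<Sum>j<ntab G. Qmat \<mu> G i j) = (\<Sum>j<ntab G. \<Sum>s\<in>UNIV. if ttab G i s = j then \<mu> s else 0)"
    by (simp add: Qmat_alt)
  also have "\<dots> = (\<Sum>s\<in>UNIV. \<Sum>j<ntab G. if ttab G i s = j then \<mu> s else 0)"
    by (rule sum.swap)
  also have "\<dots> = (\<Sum>s\<in>UNIV. \<mu> s)"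
  proof (rule sum.cong)
    fix s :: 'a
    have "ttab G i s < ntab G" using ct i unfolding code_tuple_def by blast
    then show "(\<Sum>j<ntab G. if ttab G i s = j then \<mu> s else 0) = \<mu> s"
      by (simp add: sum.delta)
  qed simp
  finally show "(\<Sum>j<ntab G. Qmat \<mu> G i j) = 1" using sum1 by simp
qed

lemma stationary_iff:
  "stationary \<mu> G p \<longleftrightarrow> invm (ntab G) (Qmat \<mu> G) p \<and> (\<Sum>i<ntab G. p i) = 1 \<and> (\<forall>i\<ge>ntab G. p i = 0)"
  unfolding stationary_def invm_def by simp

lemma pos_back:
  fixes \<mu> :: "'a::finite \<Rightarrow> real"
  assumes ct: "code_tuple G" and pos: "\<And>s. 0 < \<mu> s"
    and inv: "invm (ntab G) (Qmat \<mu> G) v" and nn: "\<And>i. 0 \<le> v i"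
  shows "k < ntab G \<Longrightarrow> v (tstar G k x) = 0 \<Longrightarrow> v k = 0"
proof (induction x arbitrary: k)
  case Nil
  then show ?case by simp
next
  case (Cons a x)
  let ?k' = "ttab G k a"
  have k': "?k' < ntab G" using ct Cons.prems(1) unfolding code_tuple_def by blast
  have "v ?k' = 0" using Cons.IH[OF k'] Cons.prems(2) by simp
  moreover have "v ?k' = (\<Sum>i<ntab G. v i * Qmat \<mu> G i ?k')" using inv k' unfolding invm_def by simp
  moreover have "v k * Qmat \<mu> G k ?k' \<le> (\<Sum>i<ntab G. v i * Qmat \<mu> G i ?k')"
    using Cons.prems(1) by (intro member_le_sum) (auto intro!: mult_nonneg_nonneg nn Qmat_nonneg pos)
  moreover have "v k * \<mu> a \<le> v k * Qmat \<mu> G k ?k'"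
    using Qmat_ge[OF pos] nn by (intro mult_left_mono) auto
  ultimately have "v k * \<mu> a \<le> 0" by simp
  moreover have "0 \<le> v k" by (rule nn)
  moreover have "0 < \<mu> a" by (rule pos)
  ultimately show ?case by (simp add: mult_le_0_iff)
qed

lemma uniq_stat:
  fixes \<mu> :: "'a::finite \<Rightarrow> real"
  assumes ct: "code_tuple G" and pos: "\<And>s. 0 < \<mu> s" and sum1: "(\<Sum>s\<in>UNIV. \<mu> s) = 1"
    and r: "r < ntab G" and reach: "\<And>k. k < ntab G \<Longrightarrow> \<exists>x. tstar G k x = r"
    and p: "stationary \<mu> G p" and q: "stationary \<mu> G q"
  shows "p = q"
proof -
  let ?n = "ntab G" and ?Q = "Qmat \<mu> G"
  have st: "stoch ?n ?Q" by (rule stoch_Qmat[OF ct pos sum1])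
  define d where "d i = p i - q i" for i
  have invd: "(\<Sum>i<?n. d i * ?Q i j) = d j" if "j < ?n" for j
    using p q that unfolding stationary_iff invm_def d_def
    by (simp add: left_diff_distrib sum_subtractf)
  have sumd: "(\<Sum>i<?n. d i) = 0" using p q unfolding stationary_iff d_def by (simp add: sum_subtractf)
  have outd: "d i = 0" if "i \<ge> ?n" for i using p q that unfolding stationary_iff d_def by simp
  have Qnn: "0 \<le> ?Q i j" for i j by (rule Qmat_nonneg[OF pos])
  define dp where "dp i = max (d i) 0" for i
  define dm where "dm i = max (- d i) 0" for i
  have invdp: "invm ?n ?Q dp" unfolding invm_def
  proof (intro allI impI)
    fix j assume j: "j < ?n"
    have le: "dp j \<le> (\<Sum>i<?n. dp i * ?Q i j)" if "j < ?n" for j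
    proof -
      have "d j \<le> (\<Sum>i<?n. dp i * ?Q i j)"
        unfolding invd[OF that, symmetric] by (intro sum_mono mult_right_mono) (auto simp: dp_def Qnn)
      moreover have "0 \<le> (\<Sum>i<?n. dp i * ?Q i j)" by (intro sum_nonneg mult_nonneg_nonneg) (auto simp: dp_def Qnn)
      ultimately show ?thesis unfolding dp_def by simp
    qed
    from stoch_sum_eq[OF st, of dp, OF le j] show "(\<Sum>i<?n. dp i * ?Q i j) = dp j" by simp
  qed
  have invdm: "invm ?n ?Q dm" unfolding invm_def
  proof (intro allI impI)
    fix j assume j: "j < ?n"
    have le: "dm j \<le> (\<Sum>i<?n. dm i * ?Q i j)" if "j < ?n" for j
    proof -
      have "- d j = (\<Sum>i<?n. (- d i) * ?Q i j)" unfolding invd[OF that, symmetric]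
        by (simp add: sum_negf)
      also have "\<dots> \<le> (\<Sum>i<?n. dm i * ?Q i j)"
        by (intro sum_mono mult_right_mono) (auto simp: dm_def Qnn)
      finally have "- d j \<le> (\<Sum>i<?n. dm i * ?Q i j)" .
      moreover have "0 \<le> (\<Sum>i<?n. dm i * ?Q i j)" by (intro sum_nonneg mult_nonneg_nonneg) (auto simp: dm_def Qnn)
      ultimately show ?thesis unfolding dm_def by simp
    qed
    from stoch_sum_eq[OF st, of dm, OF le j] show "(\<Sum>i<?n. dm i * ?Q i j) = dm j" by simp
  qed
  have "(\<forall>i<?n. 0 \<le> d i) \<or> (\<forall>i<?n. d i \<le> 0)"
  proof (cases "0 \<le> d r")
    case True
    then have "dm r = 0" unfolding dm_def by simp
    then have "dm k = 0" if "k < ?n" for k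
      using pos_back[OF ct pos invdm _ that] reach[OF that] by (auto simp: dm_def)
    then have "max (- d k) 0 = 0" if "k < ?n" for k using that unfolding dm_def by simp
    then have "\<forall>k<?n. 0 \<le> d k" by (metis max.cobounded1 neg_le_0_iff_le)
    then show ?thesis by simp
  next
    case False
    then have "dp r = 0" unfolding dp_def by simp
    then have "dp k = 0" if "k < ?n" for k
      using pos_back[OF ct pos invdp _ that] reach[OF that] by (auto simp: dp_def)
    then have "max (d k) 0 = 0" if "k < ?n" for k using that unfolding dp_def by simp
    then have "\<forall>k<?n. d k \<le> 0" by (metis max.cobounded1)
    then show ?thesis by simp
  qed
  then have "\<forall>i<?n. d i = 0"
  proof
    assume a: "\<forall>i<?n. 0 \<le> d i"
    then show ?thesis using sumd sum_nonneg_eq_0_iff[of "{..<?n}" d] by simp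
  next
    assume a: "\<forall>i<?n. d i \<le> 0"
    have "(\<Sum>i<?n. - d i) = 0" using sumd by (simp add: sum_negf)
    then show ?thesis using a sum_nonneg_eq_0_iff[of "{..<?n}" "\<lambda>i. - d i"] by simp
  qed
  then have "\<forall>i. d i = 0" using outd by (metis not_less)
  then show ?thesis unfolding d_def by auto
qed

lemma exists_closed:
  fixes \<mu> :: "'a::finite \<Rightarrow> real"
  assumes ct: "code_tuple G" and pos: "\<And>s. 0 < \<mu> s" and sum1: "(\<Sum>s\<in>UNIV. \<mu> s) = 1"
    and C: "C \<subseteq> {..<ntab G}" "c0 \<in> C" "\<And>k s. k \<in> C \<Longrightarrow> ttab G k s \<in> C"
  shows "\<exists>v. stationary \<mu> G v \<and> (\<forall>i. 0 \<le> v i) \<and> (\<forall>i. i \<notin> C \<longrightarrow> v i = 0)"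
proof -
  let ?n = "ntab G" and ?Q = "Qmat \<mu> G"
  have st: "stoch ?n ?Q" by (rule stoch_Qmat[OF ct pos sum1])
  define P where "P i j = (if i \<in> C then ?Q i j else if j = c0 then 1 else 0)" for i j
  have c0n: "c0 < ?n" using C by auto
  have stP: "stoch ?n P" unfolding stoch_def
  proof (intro conjI allI impI)
    fix i j assume "i < ?n" "j < ?n"
    then show "0 \<le> P i j" using st unfolding P_def stoch_def by auto
  next
    fix i assume i: "i < ?n"
    show "(\<Sum>j<?n. P i j) = 1"
    proof (cases "i \<in> C")
      case True
      then show ?thesis using st i unfolding P_def stoch_def by simp
    next
      case False
      then show ?thesis using c0n unfolding P_def by (simp add: sum.delta')
    qed
  qed
  have n1: "?n \<ge> 1" using ct unfolding code_tuple_def by simp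
  obtain v where v: "invm ?n P v" "\<forall>i. 0 \<le> v i" "(\<Sum>i<?n. v i) = 1" "\<forall>i\<ge>?n. v i = 0"
    using stoch_exists[OF stP n1] by blast
  have out: "v i = 0" if "i \<notin> C" for i
  proof (cases "i < ?n")
    case True
    have "v i = (\<Sum>k<?n. v k * P k i)" using v(1) True unfolding invm_def by simp
    also have "\<dots> = 0"
    proof (intro sum.neutral ballI)
      fix k assume "k \<in> {..<?n}"
      show "v k * P k i = 0"
      proof (cases "k \<in> C")
        case True
        then have "?Q k i = 0" using C(3) \<open>i \<notin> C\<close> by (intro Qmat_zero) metis
        then show ?thesis using True unfolding P_def by simp
      next
        case False
        then show ?thesis using \<open>i \<notin> C\<close> C(2) unfolding P_def by auto
      qed
    qed
    finally show ?thesis .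
  next
    case False
    then show ?thesis using v(4) by simp
  qed
  have "invm ?n ?Q v" unfolding invm_def
  proof (intro allI impI)
    fix j assume j: "j < ?n"
    have "(\<Sum>i<?n. v i * ?Q i j) = (\<Sum>i<?n. v i * P i j)"
      by (intro sum.cong) (auto simp: P_def out)
    also have "\<dots> = v j" using v(1) j unfolding invm_def by simp
    finally show "(\<Sum>i<?n. v i * ?Q i j) = v j" .
  qed
  then have "stationary \<mu> G v" unfolding stationary_iff using v by simp
  then show ?thesis using v(2) out by blast
qed

lemma pre_take: "length c = n \<Longrightarrow> prefix c w \<longleftrightarrow> take n w = c"
proof
  assume "length c = n" "prefix c w"
  then show "take n w = c" by (auto simp: prefix_def)
next
  assume "length c = n" "take n w = c"
  then show "prefix c w" using take_is_prefix by metis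
qed

lemma Pset_take: "Pset G n k [] = {c. length c = n \<and> (\<exists>x. x \<noteq> [] \<and> take n (fstar G k x) = c)}"
  unfolding Pset_def using pre_take by auto

lemma Pbar_char:
  "c \<in> Pbar G 2 k bb \<longleftrightarrow> length c = 2 \<and>
     (\<exists>s y z. ftab G k s = bb @ z \<and> z \<noteq> [] \<and> take 2 (z @ fstar G (ttab G k s) y) = c)"
proof
  assume "c \<in> Pbar G 2 k bb"
  then obtain x where c: "length c = 2" "x \<noteq> []" "prefix (bb @ c) (fstar G k x)"
    "strict_prefix bb (ftab G k (hd x))" unfolding Pbar_def by auto
  obtain s y where x: "x = s # y" using c(2) by (cases x) auto
  obtain z where z: "ftab G k s = bb @ z" "z \<noteq> []" using c(4) x
    by (auto simp: strict_prefix_def prefix_def)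
  have "prefix (bb @ c) (bb @ (z @ fstar G (ttab G k s) y))" using c(3) x z by simp
  then have "prefix c (z @ fstar G (ttab G k s) y)" by simp
  then have "take 2 (z @ fstar G (ttab G k s) y) = c" using pre_take c(1) by blast
  then show "length c = 2 \<and> (\<exists>s y z. ftab G k s = bb @ z \<and> z \<noteq> [] \<and> take 2 (z @ fstar G (ttab G k s) y) = c)"
    using c(1) z by blast
next
  assume "length c = 2 \<and> (\<exists>s y z. ftab G k s = bb @ z \<and> z \<noteq> [] \<and> take 2 (z @ fstar G (ttab G k s) y) = c)"
  then obtain s y z where c: "length c = 2" "ftab G k s = bb @ z" "z \<noteq> []"
    "take 2 (z @ fstar G (ttab G k s) y) = c" by blast
  have "prefix c (z @ fstar G (ttab G k s) y)" using pre_take c(1,4) by blast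
  then have "prefix (bb @ c) (fstar G k (s # y))" using c(2) by simp
  moreover have "strict_prefix bb (ftab G k (hd (s # y)))" using c(2,3)
    by (simp add: strict_prefix_def)
  ultimately show "c \<in> Pbar G 2 k bb" unfolding Pbar_def using c(1) by blast
qed

lemma all_len2: "{c::bool list. length c = 2} = {[False,False],[False,True],[True,False],[True,True]}"
  by (auto simp: numeral_2_eq_2 length_Suc_conv)

lemma finite_len2: "finite {c::bool list. length c = 2}"
  by (simp add: all_len2)

lemma card_len2: "card {c::bool list. length c = 2} = 4"
  by (simp add: all_len2)

lemma Pset2_sub: "Pset G 2 k bb \<subseteq> {c::bool list. length c = 2}"
  unfolding Pset_def by auto

lemma card_Pset2_le: "card (Pset G 2 k bb) \<le> 4"
  using card_mono[OF finite_len2 Pset2_sub] card_len2 by simp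

lemma take2_app: "z \<noteq> [] \<Longrightarrow> take 1 r = take 1 r' \<Longrightarrow> take 2 (z @ r) = take 2 (z @ r')"
  by (cases z; cases "tl z") (simp_all add: numeral_2_eq_2)

lemma take1_app: "take 1 (u @ r) = (if u = [] then take 1 r else take 1 u)"
  by (cases u) auto

lemma tstar_lt: "code_tuple G \<Longrightarrow> k < ntab G \<Longrightarrow> tstar G k x < ntab G"
  by (induction x arbitrary: k) (auto simp: code_tuple_def)

locale code_setting =
  fixes \<mu> :: "'a::finite \<Rightarrow> real" and F :: "'a ctuple"
  assumes card2: "card (UNIV :: 'a set) \<ge> 2"
    and pos: "\<And>s. 0 < \<mu> s" and sum1: "(\<Sum>s\<in>UNIV. \<mu> s) = 1"
    and ct: "code_tuple F" and reg: "regular \<mu> F" and ext: "ext_code F" and td: "two_dec F"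
    and ge3: "\<And>k. k < ntab F \<Longrightarrow> 3 \<le> card (Pset F 2 k [])"
begin

lemma tt_lt: "k < ntab F \<Longrightarrow> ttab F k s < ntab F"
  using ct unfolding code_tuple_def by blast

lemma two_symbols: "\<exists>s'::'a. s' \<noteq> s"
proof (rule ccontr)
  assume "\<not> ?thesis"
  then have u: "(UNIV :: 'a set) = {s}" by auto
  have "card (UNIV :: 'a set) = card {s}" by (simp only: u)
  then show False using card2 by simp
qed

lemma reach1:
  assumes k: "k < ntab F"
  shows "\<exists>x. x \<noteq> [] \<and> take 1 (fstar F k x) = [\<beta>]"
proof (rule ccontr)
  assume no: "\<not> ?thesis"
  have "Pset F 2 k [] \<subseteq> {[\<not>\<beta>, False], [\<not>\<beta>, True]}"
  proof
    fix c assume "c \<in> Pset F 2 k []"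
    then obtain x where x: "length c = 2" "x \<noteq> []" "take 2 (fstar F k x) = c"
      unfolding Pset_take by auto
    obtain p q where c: "c = [p, q]" using x(1) by (auto simp: numeral_2_eq_2 length_Suc_conv)
    have "take 1 (fstar F k x) = take 1 (take 2 (fstar F k x))" by simp
    then have "take 1 (fstar F k x) = [p]" using x(3) c by simp
    then have "p \<noteq> \<beta>" using no x(2) by auto
    then show "c \<in> {[\<not>\<beta>, False], [\<not>\<beta>, True]}" using c by (cases q) auto
  qed
  then have "card (Pset F 2 k []) \<le> card {[\<not>\<beta>, False], [\<not>\<beta>, True]}"
    by (intro card_mono) auto
  also have "\<dots> \<le> 2" by (simp add: card_insert_if)
  finally show False using ge3[OF k] by simp
qed

lemma disj_card:
  assumes "A \<subseteq> {c::bool list. length c = 2}" "B \<subseteq> {c::bool list. length c = 2}" "A \<inter> B = {}"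
  shows "card A + card B \<le> 4"
proof -
  have fA: "finite A" "finite B" using assms finite_subset finite_len2 by blast+
  have "card A + card B = card (A \<union> B)" using card_Un_disjoint[OF fA assms(3)] by simp
  also have "\<dots> \<le> 4" using card_mono[OF finite_len2, of "A \<union> B"] assms card_len2 by simp
  finally show ?thesis .
qed

lemma inj_tab:
  assumes k: "k < ntab F" and ne: "s \<noteq> s'"
  shows "ftab F k s \<noteq> ftab F k s'"
proof
  assume eq: "ftab F k s = ftab F k s'"
  then have "Pset F 2 (ttab F k s) [] \<inter> Pset F 2 (ttab F k s') [] = {}"
    using td k ne unfolding two_dec_def by blast
  then have "card (Pset F 2 (ttab F k s) []) + card (Pset F 2 (ttab F k s') []) \<le> 4"
    by (intro disj_card Pset2_sub)
  moreover have "3 \<le> card (Pset F 2 (ttab F k s) [])" "3 \<le> card (Pset F 2 (ttab F k s') [])"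
    using ge3 tt_lt k by auto
  ultimately show False by simp
qed

lemma missing_pattern:
  assumes k: "k < ntab F" and c3: "card (Pset F 2 k []) = 3"
  shows "\<exists>a b. [a,b] \<notin> Pset F 2 k [] \<and> (\<forall>c. length c = 2 \<and> c \<noteq> [a,b] \<longrightarrow> c \<in> Pset F 2 k [])"
proof -
  let ?L = "{c::bool list. length c = 2}" and ?P = "Pset F 2 k []"
  have "card (?L - ?P) = card ?L - card ?P"
    using card_Diff_subset[OF finite_subset[OF Pset2_sub finite_len2] Pset2_sub] .
  then have "card (?L - ?P) = 1" using c3 card_len2 by simp
  then obtain e where e: "?L - ?P = {e}" using card_1_singletonE by blast
  then have "length e = 2" by auto
  then obtain a b where ab: "e = [a,b]" by (auto simp: numeral_2_eq_2 length_Suc_conv)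
  have "[a,b] \<notin> ?P" using e ab by auto
  moreover have "\<forall>c. length c = 2 \<and> c \<noteq> [a,b] \<longrightarrow> c \<in> ?P" using e ab by auto
  ultimately show ?thesis by blast
qed

lemma free_codeword:
  assumes j: "j < ntab F"
  shows "\<exists>s. ftab F j s \<noteq> [] \<and> Pbar F 2 j (ftab F j s) = {}"
proof -
  let ?M = "Max (range (\<lambda>s. length (ftab F j s)))"
  have "?M \<in> range (\<lambda>s. length (ftab F j s))" by (intro Max_in) auto
  then obtain s where s: "length (ftab F j s) = ?M" by (metis (no_types, lifting) imageE)
  have ge: "length (ftab F j s') \<le> length (ftab F j s)" for s' unfolding s by (intro Max_ge) auto
  obtain s1 :: 'a where "s1 \<noteq> s" using two_symbols by blast
  then have "ftab F j s1 \<noteq> ftab F j s" using inj_tab j by blast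
  then have "ftab F j s \<noteq> []" using ge[of s1] by auto
  moreover have "Pbar F 2 j (ftab F j s) = {}"
  proof (rule ccontr)
    assume "Pbar F 2 j (ftab F j s) \<noteq> {}"
    then obtain x where "strict_prefix (ftab F j s) (ftab F j (hd x))" unfolding Pbar_def by auto
    then have "length (ftab F j s) < length (ftab F j (hd x))" by (rule prefix_length_less)
    then show False using ge[of "hd x"] by simp
  qed
  ultimately show ?thesis by blast
qed

lemma reg_unique: "stationary \<mu> F p \<Longrightarrow> stationary \<mu> F q \<Longrightarrow> p = q"
  using reg unfolding regular_def by blast

lemma statdist_stat: "stationary \<mu> F (statdist \<mu> F)"
  using reg unfolding regular_def statdist_def by (rule theI')

lemma statdist_nn: "0 \<le> statdist \<mu> F i"
proof -
  have n1: "ntab F \<ge> 1" using ct unfolding code_tuple_def by simp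
  obtain v where v: "invm (ntab F) (Qmat \<mu> F) v" "\<forall>i. 0 \<le> v i" "(\<Sum>i<ntab F. v i) = 1" "\<forall>i\<ge>ntab F. v i = 0"
    using stoch_exists[OF stoch_Qmat[OF ct pos sum1] n1] by blast
  then have "stationary \<mu> F v" unfolding stationary_iff by simp
  then have "statdist \<mu> F = v" using reg_unique statdist_stat by blast
  then show ?thesis using v(2) by simp
qed

lemma R_closed: "i \<in> Rset F \<Longrightarrow> ttab F i s \<in> Rset F"
proof -
  assume i: "i \<in> Rset F"
  have "\<exists>x. tstar F j x = ttab F i s" if jj: "j < ntab F" for j
  proof -
    obtain x where "tstar F j x = i" using i jj unfolding Rset_def by blast
    then have "tstar F j (x @ [s]) = ttab F i s" by (simp add: tstar_append)
    then show ?thesis by blast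
  qed
  moreover have "ttab F i s < ntab F" using i tt_lt unfolding Rset_def by blast
  ultimately show ?thesis unfolding Rset_def by blast
qed

lemma statdist_pos:
  assumes i: "i \<in> Rset F"
  shows "0 < statdist \<mu> F i"
proof (rule ccontr)
  let ?p = "statdist \<mu> F"
  assume "\<not> 0 < ?p i"
  then have z: "?p i = 0" using statdist_nn[of i] by simp
  have inv: "invm (ntab F) (Qmat \<mu> F) ?p" using statdist_stat unfolding stationary_iff by simp
  have "?p k = 0" if k: "k < ntab F" for k
  proof -
    obtain x where "tstar F k x = i" using i k unfolding Rset_def by blast
    then show ?thesis using pos_back[OF ct pos inv statdist_nn k, where x=x] z by simp
  qed
  then have "(\<Sum>k<ntab F. ?p k) = 0" by simp
  then show False using statdist_stat unfolding stationary_iff by simp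
qed

definition closedS :: "nat set \<Rightarrow> bool" where
  "closedS C \<longleftrightarrow> C \<subseteq> {..<ntab F} \<and> C \<noteq> {} \<and> (\<forall>k\<in>C. \<forall>s. ttab F k s \<in> C)"

lemma R_nonempty: "\<exists>r. r \<in> Rset F"
proof -
  have "0 \<in> {..<ntab F}" using ct unfolding code_tuple_def by auto
  then have "closedS {..<ntab F}" unfolding closedS_def using tt_lt by blast
  then have ex: "\<exists>n. \<exists>C. closedS C \<and> card C = n" by blast
  define n0 where "n0 = (LEAST n. \<exists>C. closedS C \<and> card C = n)"
  obtain C1 where C1: "closedS C1" "card C1 = n0" using LeastI_ex[OF ex] unfolding n0_def by blast
  have minC: "card C1 \<le> card C" if "closedS C" for C
    unfolding C1(2) n0_def using that by (intro Least_le) blast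
  obtain c where c: "c \<in> C1" using C1(1) unfolding closedS_def by blast
  have fin1: "finite C1" using C1(1) unfolding closedS_def using finite_subset by blast
  have "c \<in> Rset F"
  proof (rule ccontr)
    assume "c \<notin> Rset F"
    moreover have "c < ntab F" using c C1(1) unfolding closedS_def by auto
    ultimately obtain j where j: "j < ntab F" "\<And>x. tstar F j x \<noteq> c" unfolding Rset_def by blast
    define D where "D = range (tstar F j)"
    have D: "closedS D" unfolding closedS_def D_def
    proof (intro conjI ballI allI)
      show "range (tstar F j) \<subseteq> {..<ntab F}" using tstar_lt[OF ct j(1)] by auto
      show "range (tstar F j) \<noteq> {}" by simp
      fix k s assume "k \<in> range (tstar F j)"
      then obtain x where "k = tstar F j x" by auto
      then have "ttab F k s = tstar F j (x @ [s])" by (simp add: tstar_append)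
      then show "ttab F k s \<in> range (tstar F j)" by simp
    qed
    have cD: "c \<notin> D" using j(2) unfolding D_def by auto
    have disj: "C1 \<inter> D = {}"
    proof (rule ccontr)
      assume ne: "C1 \<inter> D \<noteq> {}"
      have "closedS (C1 \<inter> D)" using C1(1) D ne unfolding closedS_def by auto
      moreover have "card (C1 \<inter> D) < card C1"
        using c cD fin1 by (intro psubset_card_mono) auto
      ultimately show False using minC by fastforce
    qed
    obtain v1 where v1: "stationary \<mu> F v1" "\<forall>i. i \<notin> C1 \<longrightarrow> v1 i = 0"
      using exists_closed[OF ct pos sum1, of C1 c] C1(1) c unfolding closedS_def by blast
    obtain v2 where v2: "stationary \<mu> F v2" "\<forall>i. i \<notin> D \<longrightarrow> v2 i = 0"
      using exists_closed[OF ct pos sum1, of D j] D j(1) unfolding closedS_def D_def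
      by (metis rangeI tstar.simps(1))
    have "v1 = v2" using reg_unique v1(1) v2(1) by blast
    then have "v1 i = 0" for i using v1(2) v2(2) disj by (cases "i \<in> C1") auto
    then show False using v1(1) unfolding stationary_iff by simp
  qed
  then show ?thesis by blast
qed

end

locale constr = code_setting +
  fixes j0 :: nat and s0 :: 'a and t :: nat and a b :: bool
  assumes j0R: "j0 \<in> Rset F" and s0ne: "ftab F j0 s0 \<noteq> []"
    and s0free: "Pbar F 2 j0 (ftab F j0 s0) = {}"
    and tdef: "t = ttab F j0 s0" and tcard: "card (Pset F 2 t []) = 3"
    and miss: "[a,b] \<notin> Pset F 2 t []"
    and oth: "\<And>c. length c = 2 \<Longrightarrow> c \<noteq> [a,b] \<Longrightarrow> c \<in> Pset F 2 t []"
begin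

lemma j0lt: "j0 < ntab F" using j0R unfolding Rset_def by simp
lemma tR: "t \<in> Rset F" using R_closed[OF j0R] tdef by simp
lemma tlt: "t < ntab F" using tR unfolding Rset_def by simp

lemma cw_ne: "ftab F t s \<noteq> []"
proof
  assume e: "ftab F t s = []"
  let ?j = "ttab F t s"
  have jlt: "?j < ntab F" using tt_lt tlt by simp
  have sub1: "Pset F 2 ?j [] \<subseteq> Pset F 2 t []"
  proof
    fix c assume "c \<in> Pset F 2 ?j []"
    then obtain x where x: "length c = 2" "x \<noteq> []" "take 2 (fstar F ?j x) = c"
      unfolding Pset_take by auto
    have "fstar F t (s # x) = fstar F ?j x" using e by simp
    then show "c \<in> Pset F 2 t []" unfolding Pset_take using x by (intro CollectI conjI exI[of _ "s # x"]) auto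
  qed
  have disj: "Pset F 2 ?j [] \<inter> Pbar F 2 t [] = {}" using td tlt e unfolding two_dec_def by metis
  have sub2: "Pbar F 2 t [] \<subseteq> Pset F 2 t []" unfolding Pset_def Pbar_def by auto
  obtain s1 :: 'a where s1: "s1 \<noteq> s" using two_symbols by blast
  then have ne1: "ftab F t s1 \<noteq> []" using inj_tab[OF tlt s1] e by simp
  obtain y where y: "y \<noteq> []" "take 1 (fstar F (ttab F t s1) y) = [True]"
    using reach1[OF tt_lt[OF tlt]] by blast
  let ?c = "take 2 (ftab F t s1 @ fstar F (ttab F t s1) y)"
  have "length ?c = 2" using ne1 y(2) by (cases "ftab F t s1"; cases "fstar F (ttab F t s1) y") auto
  then have "?c \<in> Pbar F 2 t []" unfolding Pbar_char using ne1 by auto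
  then have ne: "Pbar F 2 t [] \<noteq> {}" by blast
  have fin: "finite (Pset F 2 t [])" using finite_subset[OF Pset2_sub finite_len2] .
  have fj: "finite (Pset F 2 ?j [])" "finite (Pbar F 2 t [])"
    using fin sub1 sub2 finite_subset by blast+
  have "card (Pset F 2 ?j [] \<union> Pbar F 2 t []) = card (Pset F 2 ?j []) + card (Pbar F 2 t [])"
    using card_Un_disjoint[OF fj disj] .
  moreover have "card (Pbar F 2 t []) \<ge> 1" using ne fj(2) by (simp add: Suc_le_eq card_gt_0_iff)
  moreover have "card (Pset F 2 ?j []) \<ge> 3" using ge3 jlt by simp
  moreover have "card (Pset F 2 ?j [] \<union> Pbar F 2 t []) \<le> card (Pset F 2 t [])"
    using sub1 sub2 fin by (intro card_mono) auto
  ultimately show False using tcard by simp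
qed

lemma cw_a: "hd (ftab F t s) = a \<Longrightarrow> \<exists>w. ftab F t s = a # (\<not>b) # w"
proof -
  assume h: "hd (ftab F t s) = a"
  obtain u1 where u: "ftab F t s = a # u1" using cw_ne[of s] h by (cases "ftab F t s") auto
  show ?thesis
  proof (cases u1)
    case Nil
    obtain y where y: "y \<noteq> []" "take 1 (fstar F (ttab F t s) y) = [b]"
      using reach1[OF tt_lt[OF tlt]] by blast
    have "take 2 (fstar F t (s # y)) = [a, b]" using u Nil y(2)
      by (cases "fstar F (ttab F t s) y") (auto simp: numeral_2_eq_2)
    then have "[a,b] \<in> Pset F 2 t []" unfolding Pset_take by (intro CollectI conjI exI[of _ "s # y"]) auto
    then show ?thesis using miss by simp
  next
    case (Cons c w)
    show ?thesis
    proof (cases "c = b")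
      case True
      have "take 2 (fstar F t [s]) = [a, b]" using u Cons True by (simp add: numeral_2_eq_2)
      then have "[a,b] \<in> Pset F 2 t []" unfolding Pset_take by (intro CollectI conjI exI[of _ "[s]"]) auto
      then show ?thesis using miss by simp
    next
      case False
      then have "c = (\<not> b)" by auto
      then show ?thesis using u Cons by blast
    qed
  qed
qed

lemma exists_a: "\<exists>s. hd (ftab F t s) = a"
proof -
  have "[a, \<not>b] \<in> Pset F 2 t []" by (intro oth) auto
  then obtain x where x: "x \<noteq> []" "take 2 (fstar F t x) = [a, \<not>b]" unfolding Pset_take by auto
  obtain s y where sy: "x = s # y" using x(1) by (cases x) auto
  have "fstar F t x = ftab F t s @ fstar F (ttab F t s) y" using sy by simp
  moreover obtain p u where "ftab F t s = p # u" using cw_ne[of s] by (cases "ftab F t s") auto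
  ultimately have "take 2 (fstar F t x) = p # take 1 (u @ fstar F (ttab F t s) y)"
    by (simp add: numeral_2_eq_2)
  then have "p = a" using x(2) by simp
  then have "hd (ftab F t s) = a" using \<open>ftab F t s = p # u\<close> by simp
  then show ?thesis by blast
qed

definition redir :: "nat \<Rightarrow> 'a \<Rightarrow> bool" where
  "redir k s \<longleftrightarrow> k < ntab F \<and> ttab F k s = t \<and> ftab F k s \<noteq> [] \<and> Pbar F 2 k (ftab F k s) = {}"

definition contr :: "bool list \<Rightarrow> bool list" where
  "contr w = (if w \<noteq> [] \<and> hd w = a then a # drop 2 w else w)"

definition orig :: "nat \<Rightarrow> nat" where
  "orig k = (if k = ntab F then t else k)"

definition G :: "'a ctuple" where
  "G = F\<lparr>ntab := Suc (ntab F),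
          ftab := (\<lambda>k s. if k = ntab F then contr (ftab F t s) else ftab F k s),
          ttab := (\<lambda>k s. if redir (orig k) s then ntab F else ttab F (orig k) s)\<rparr>"

lemma G_simps:
  "ntab G = Suc (ntab F)"
  "ftab G k s = (if k = ntab F then contr (ftab F t s) else ftab F k s)"
  "ttab G k s = (if redir (orig k) s then ntab F else ttab F (orig k) s)"
  unfolding G_def by simp_all

lemma orig_lt: "k \<le> ntab F \<Longrightarrow> orig k < ntab F"
  unfolding orig_def using tlt by auto

lemma orig_id: "k < ntab F \<Longrightarrow> orig k = k"
  unfolding orig_def by simp

lemma ttG_le: "k \<le> ntab F \<Longrightarrow> ttab G k s \<le> ntab F"
  using tt_lt[OF orig_lt] unfolding G_simps by (auto simp: less_imp_le)

lemma orig_step: "k \<le> ntab F \<Longrightarrow> orig (ttab G k s) = ttab F (orig k) s"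
proof -
  assume k: "k \<le> ntab F"
  show ?thesis
  proof (cases "redir (orig k) s")
    case True
    then show ?thesis unfolding G_simps orig_def redir_def by simp
  next
    case False
    have "ttab F (orig k) s < ntab F" using tt_lt[OF orig_lt[OF k]] .
    then show ?thesis using False unfolding G_simps orig_def by simp
  qed
qed

lemma contr_nil: "(contr w = []) = (w = [])"
  unfolding contr_def by auto

lemma take1_contr: "take 1 (contr w) = take 1 w"
  unfolding contr_def by (cases w) auto

lemma ftabG_nil: "k \<le> ntab F \<Longrightarrow> (ftab G k s = []) = (ftab F (orig k) s = [])"
  unfolding G_simps orig_def by (auto simp: contr_nil)

lemma ftabG_take1: "k \<le> ntab F \<Longrightarrow> take 1 (ftab G k s) = take 1 (ftab F (orig k) s)"
  unfolding G_simps orig_def using take1_contr[of "ftab F t s"] by auto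

lemma claimA: "k \<le> ntab F \<Longrightarrow> take 1 (fstar G k x) = take 1 (fstar F (orig k) x)"
proof (induction x arbitrary: k)
  case Nil
  then show ?case by simp
next
  case (Cons s y)
  have IH: "take 1 (fstar G (ttab G k s) y) = take 1 (fstar F (ttab F (orig k) s) y)"
    using Cons.IH[OF ttG_le[OF Cons.prems]] orig_step[OF Cons.prems] by simp
  show ?case unfolding fstar.simps take1_app
    using IH ftabG_nil[OF Cons.prems, of s] ftabG_take1[OF Cons.prems, of s]
    by simp
qed

lemma claimB: "k < ntab F \<Longrightarrow> take 2 (fstar G k x) = take 2 (fstar F k x)"
proof (induction x arbitrary: k)
  case Nil
  then show ?case by simp
next
  case (Cons s y)
  have fe: "ftab G k s = ftab F k s" using Cons.prems unfolding G_simps by simp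
  have ok: "orig k = k" using orig_id Cons.prems by simp
  show ?case
  proof (cases "ftab F k s = []")
    case True
    then have "\<not> redir k s" unfolding redir_def by simp
    then have tt: "ttab G k s = ttab F k s" using ok unfolding G_simps by simp
    have "ttab F k s < ntab F" using tt_lt Cons.prems by simp
    then show ?thesis using Cons.IH[of "ttab F k s"] fe tt True by simp
  next
    case False
    have "take 1 (fstar G (ttab G k s) y) = take 1 (fstar F (ttab F k s) y)"
      using claimA[OF ttG_le, of k s y] orig_step[of k s] ok Cons.prems by simp
    then show ?thesis using fe False take2_app by simp
  qed
qed

lemma PsetG2: "k < ntab F \<Longrightarrow> Pset G 2 k [] = Pset F 2 k []"
  unfolding Pset_take using claimB by simp

lemma PsetG1: "k \<le> ntab F \<Longrightarrow> Pset G 1 k [] = Pset F 1 (orig k) []"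
  unfolding Pset_take using claimA by simp

lemma PbarG:
  assumes k: "k < ntab F"
  shows "Pbar G 2 k bb = Pbar F 2 k bb"
proof -
  have ok: "orig k = k" using orig_id k by simp
  have fe: "ftab G k s = ftab F k s" for s using k unfolding G_simps by simp
  have tk: "take 2 (z @ fstar G (ttab G k s) y) = take 2 (z @ fstar F (ttab F k s) y)" if "z \<noteq> []" for z s y
  proof -
    have "take 1 (fstar G (ttab G k s) y) = take 1 (fstar F (ttab F k s) y)"
      using claimA[OF ttG_le, of k s y] orig_step[of k s] ok k by simp
    then show ?thesis using take2_app that by blast
  qed
  show ?thesis
  proof (rule Set.set_eqI)
    fix c
    show "c \<in> Pbar G 2 k bb \<longleftrightarrow> c \<in> Pbar F 2 k bb"
      unfolding Pbar_char fe using tk by metis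
  qed
qed

definition valid :: "bool list \<Rightarrow> bool" where
  "valid w \<longleftrightarrow> w \<noteq> [] \<and> (hd w = a \<longrightarrow> (\<exists>w'. w = a # (\<not>b) # w'))"

lemma cw_valid: "valid (ftab F t s)"
  unfolding valid_def using cw_ne cw_a by blast

lemma contr_a: "contr (a # c # w) = a # w"
  unfolding contr_def by simp

lemma contr_na: "w \<noteq> [] \<Longrightarrow> hd w \<noteq> a \<Longrightarrow> contr w = w"
  unfolding contr_def by simp

lemma contr_app_iff:
  assumes u: "valid u" and v: "valid v"
  shows "contr v = contr u @ z \<longleftrightarrow> v = u @ z"
proof (cases "hd u = a")
  case True
  then obtain u' where u': "u = a # (\<not>b) # u'" using u unfolding valid_def by blast
  show ?thesis
  proof (cases "hd v = a")
    case True
    then obtain v' where v': "v = a # (\<not>b) # v'" using v unfolding valid_def by blast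
    show ?thesis unfolding u' v' contr_a by simp
  next
    case False
    have "contr v = v" using False v contr_na unfolding valid_def by blast
    moreover have "v \<noteq> u @ z" using False u' by auto
    moreover have "hd (contr u @ z) = a" unfolding u' contr_a by simp
    moreover have "hd v \<noteq> a" using False .
    ultimately have "contr v \<noteq> contr u @ z" by metis
    then show ?thesis using \<open>v \<noteq> u @ z\<close> by blast
  qed
next
  case False
  have cu: "contr u = u" using False u contr_na unfolding valid_def by blast
  show ?thesis
  proof (cases "hd v = a")
    case True
    then obtain v' where v': "v = a # (\<not>b) # v'" using v unfolding valid_def by blast
    have "hd (u @ z) \<noteq> a" using False u unfolding valid_def by simp
    moreover have "hd (contr v) = a" unfolding v' contr_a by simp
    ultimately have "contr v \<noteq> contr u @ z" "v \<noteq> u @ z" using cu True by metis+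
    then show ?thesis by blast
  next
    case False
    have "contr v = v" using False v contr_na unfolding valid_def by blast
    then show ?thesis using cu by simp
  qed
qed

lemma contr_inj: "valid u \<Longrightarrow> valid v \<Longrightarrow> contr v = contr u \<Longrightarrow> v = u"
  using contr_app_iff[of u v "[]"] by simp

lemma PbarG_t: "Pbar G 2 (ntab F) (contr (ftab F t s)) = Pbar F 2 t (ftab F t s)"
proof (rule Set.set_eqI)
  fix c
  have fe: "ftab G (ntab F) s' = contr (ftab F t s')" for s' unfolding G_simps by simp
  have tk: "take 2 (z @ fstar G (ttab G (ntab F) s') y) = take 2 (z @ fstar F (ttab F t s') y)"
    if "z \<noteq> []" for z s' y
  proof -
    have "orig (ntab F) = t" unfolding orig_def by simp
    then have "take 1 (fstar G (ttab G (ntab F) s') y) = take 1 (fstar F (ttab F t s') y)"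
      using claimA[OF ttG_le, of "ntab F" s' y] orig_step[of "ntab F" s'] by simp
    then show ?thesis using take2_app that by blast
  qed
  have ca: "contr (ftab F t s') = contr (ftab F t s) @ z \<longleftrightarrow> ftab F t s' = ftab F t s @ z" for s' z
    using contr_app_iff[OF cw_valid cw_valid] .
  show "c \<in> Pbar G 2 (ntab F) (contr (ftab F t s)) \<longleftrightarrow> c \<in> Pbar F 2 t (ftab F t s)"
    unfolding Pbar_char fe ca using tk by metis
qed

lemma td_G: "two_dec G"
  unfolding two_dec_def
proof (intro conjI allI impI)
  fix i s assume i: "i < ntab G"
  show "Pset G 2 (ttab G i s) [] \<inter> Pbar G 2 i (ftab G i s) = {}"
  proof (cases "i < ntab F")
    case True
    have ok: "orig i = i" using orig_id True by simp
    have fe: "ftab G i s = ftab F i s" using True unfolding G_simps by simp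
    show ?thesis
    proof (cases "redir i s")
      case True
      then show ?thesis using PbarG[OF \<open>i < ntab F\<close>] fe unfolding redir_def by simp
    next
      case False
      then have "ttab G i s = ttab F i s" using ok unfolding G_simps by simp
      moreover have "ttab F i s < ntab F" using tt_lt True by simp
      ultimately show ?thesis using PsetG2 PbarG[OF True] fe td True unfolding two_dec_def by simp
    qed
  next
    case False
    then have inF: "i = ntab F" using i unfolding G_simps by simp
    have ok: "orig i = t" using inF unfolding orig_def by simp
    have fe: "ftab G i s = contr (ftab F t s)" using inF unfolding G_simps by simp
    show ?thesis
    proof (cases "redir t s")
      case True
      then show ?thesis using PbarG_t fe inF unfolding redir_def by simp
    next
      case False
      then have "ttab G i s = ttab F t s" using ok unfolding G_simps by simp
      moreover have "ttab F t s < ntab F" using tt_lt tlt by simp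
      ultimately show ?thesis using PsetG2 PbarG_t fe inF td tlt unfolding two_dec_def by simp
    qed
  qed
next
  fix i s s' assume i: "i < ntab G" and h: "s \<noteq> s' \<and> ftab G i s = ftab G i s'"
  show "Pset G 2 (ttab G i s) [] \<inter> Pset G 2 (ttab G i s') [] = {}"
  proof (cases "i < ntab F")
    case True
    then have "ftab F i s = ftab F i s'" using h unfolding G_simps by simp
    then show ?thesis using inj_tab[OF True] h by blast
  next
    case False
    then have inF: "i = ntab F" using i unfolding G_simps by simp
    then have "contr (ftab F t s) = contr (ftab F t s')" using h unfolding G_simps by simp
    then have "ftab F t s = ftab F t s'" using contr_inj[OF cw_valid cw_valid] by metis
    then show ?thesis using inj_tab[OF tlt] h by blast
  qed
qed

lemma ext_G: "ext_code G"
  unfolding ext_code_def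
proof (intro allI impI)
  fix i assume "i < ntab G"
  then have i: "i \<le> ntab F" unfolding G_simps by simp
  show "Pset G 1 i [] \<noteq> {}" using PsetG1[OF i] ext orig_lt[OF i] unfolding ext_code_def by simp
qed

lemma ct_G: "code_tuple G"
  unfolding code_tuple_def G_simps(1)
proof (intro conjI allI impI)
  show "1 \<le> Suc (ntab F)" by simp
  fix i s assume "i < Suc (ntab F)"
  then show "ttab G i s < Suc (ntab F)" using ttG_le by (simp add: less_Suc_eq_le)
qed

end

context constr
begin

definition rho :: "nat \<Rightarrow> real" where
  "rho i = (\<Sum>s\<in>UNIV. if redir i s then \<mu> s else 0)"

definition phi :: real where
  "phi = (\<Sum>i<ntab F. statdist \<mu> F i * rho i)"

definition pi' :: "nat \<Rightarrow> real" where
  "pi' k = statdist \<mu> F k - (if k = t then phi else 0) + (if k = ntab F then phi else 0)"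

lemma rho_nn: "0 \<le> rho i"
  unfolding rho_def using pos by (intro sum_nonneg) (auto intro: less_imp_le)

lemma QG:
  assumes i: "i < ntab F"
  shows "Qmat \<mu> G i j = Qmat \<mu> F i j - (if j = t then rho i else 0) + (if j = ntab F then rho i else 0)"
proof -
  have ok: "orig i = i" using orig_id i by simp
  have pt: "(if ttab G i s = j then \<mu> s else 0) = (if ttab F i s = j then \<mu> s else 0)
     - (if j = t then (if redir i s then \<mu> s else 0) else 0)
     + (if j = ntab F then (if redir i s then \<mu> s else 0) else 0)" for s
  proof (cases "redir i s")
    case True
    then have "ttab G i s = ntab F" "ttab F i s = t" using ok unfolding G_simps redir_def by auto
    then show ?thesis using True tlt by auto
  next
    case False
    then have "ttab G i s = ttab F i s" using ok unfolding G_simps by simp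
    then show ?thesis using False by simp
  qed
  show ?thesis unfolding Qmat_alt rho_def pt
    using tlt by (cases "j = t"; cases "j = ntab F") (simp_all add: sum.distrib sum_subtractf)
qed

lemma QG_nt: "Qmat \<mu> G (ntab F) j = Qmat \<mu> G t j"
  unfolding Qmat_def G_simps orig_def using tlt by simp

lemma QF_nt: "i < ntab F \<Longrightarrow> Qmat \<mu> F i (ntab F) = 0"
  using tt_lt by (intro Qmat_zero) (metis less_irrefl)

lemma pp_stat: "invm (ntab F) (Qmat \<mu> F) (statdist \<mu> F)" "(\<Sum>i<ntab F. statdist \<mu> F i) = 1"
  "\<And>i. i \<ge> ntab F \<Longrightarrow> statdist \<mu> F i = 0"
  using statdist_stat unfolding stationary_iff by auto

lemma pp_inv: "j \<le> ntab F \<Longrightarrow> (\<Sum>i<ntab F. statdist \<mu> F i * Qmat \<mu> F i j) = statdist \<mu> F j"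
proof -
  assume j: "j \<le> ntab F"
  show ?thesis
  proof (cases "j < ntab F")
    case True
    then show ?thesis using pp_stat(1) unfolding invm_def by simp
  next
    case False
    then have "j = ntab F" using j by simp
    then show ?thesis using QF_nt pp_stat(3) by simp
  qed
qed

lemma sum_minus_t:
  "(\<Sum>i<ntab F. (statdist \<mu> F i - (if i = t then phi else 0)) * X i) =
   (\<Sum>i<ntab F. statdist \<mu> F i * X i) - phi * X t"
proof -
  have "(\<Sum>i<ntab F. (statdist \<mu> F i - (if i = t then phi else 0)) * X i) =
        (\<Sum>i<ntab F. statdist \<mu> F i * X i - (if i = t then phi * X i else 0))"
    by (intro sum.cong) (auto simp: left_diff_distrib)
  also have "\<dots> = (\<Sum>i<ntab F. statdist \<mu> F i * X i) - (\<Sum>i<ntab F. (if i = t then phi * X i else 0))"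
    by (rule sum_subtractf)
  also have "(\<Sum>i<ntab F. (if i = t then phi * X i else 0)) = phi * X t"
    using tlt by (simp add: sum.delta)
  finally show ?thesis .
qed

lemma pi'_lt: "i < ntab F \<Longrightarrow> pi' i = statdist \<mu> F i - (if i = t then phi else 0)"
  unfolding pi'_def by simp

lemma pi'_nt: "pi' (ntab F) = phi"
  unfolding pi'_def using tlt pp_stat(3) by simp

lemma stat_G: "stationary \<mu> G pi'"
  unfolding stationary_iff G_simps(1) invm_def
proof (intro conjI allI impI)
  fix j assume j: "j < Suc (ntab F)"
  then have jle: "j \<le> ntab F" by simp
  have s1: "(\<Sum>i<ntab F. pi' i * Qmat \<mu> G i j) = (\<Sum>i<ntab F. (statdist \<mu> F i - (if i = t then phi else 0)) * Qmat \<mu> G i j)"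
    by (intro sum.cong) (auto simp: pi'_lt)
  have s2: "(\<Sum>i<ntab F. statdist \<mu> F i * Qmat \<mu> G i j) =
     statdist \<mu> F j - (if j = t then phi else 0) + (if j = ntab F then phi else 0)"
  proof -
    have "(\<Sum>i<ntab F. statdist \<mu> F i * Qmat \<mu> G i j) =
      (\<Sum>i<ntab F. statdist \<mu> F i * Qmat \<mu> F i j - (if j = t then statdist \<mu> F i * rho i else 0)
         + (if j = ntab F then statdist \<mu> F i * rho i else 0))"
      by (intro sum.cong) (auto simp: QG ring_distribs)
    also have "\<dots> = (\<Sum>i<ntab F. statdist \<mu> F i * Qmat \<mu> F i j) - (if j = t then phi else 0) + (if j = ntab F then phi else 0)"
      unfolding phi_def using tlt by (cases "j = t"; cases "j = ntab F") (simp_all add: sum.distrib sum_subtractf)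
    finally show ?thesis using pp_inv[OF jle] by simp
  qed
  have "(\<Sum>i<Suc (ntab F). pi' i * Qmat \<mu> G i j) = (\<Sum>i<ntab F. pi' i * Qmat \<mu> G i j) + pi' (ntab F) * Qmat \<mu> G (ntab F) j"
    by simp
  also have "\<dots> = (\<Sum>i<ntab F. statdist \<mu> F i * Qmat \<mu> G i j) - phi * Qmat \<mu> G t j + phi * Qmat \<mu> G t j"
    using s1 sum_minus_t[of "\<lambda>i. Qmat \<mu> G i j"] pi'_nt QG_nt by simp
  also have "\<dots> = pi' j" unfolding s2 pi'_def by simp
  finally show "(\<Sum>i<Suc (ntab F). pi' i * Qmat \<mu> G i j) = pi' j" .
next
  have "(\<Sum>i<ntab F. pi' i) = (\<Sum>i<ntab F. (statdist \<mu> F i - (if i = t then phi else 0)) * 1)"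
    by (intro sum.cong) (auto simp: pi'_lt)
  also have "\<dots> = 1 - phi" unfolding sum_minus_t using pp_stat(2) by simp
  finally show "(\<Sum>i<Suc (ntab F). pi' i) = 1" using pi'_nt by simp
next
  fix i assume "Suc (ntab F) \<le> i"
  then show "pi' i = 0" unfolding pi'_def using pp_stat(3) tlt by simp
qed

lemma orig_tstar: "k \<le> ntab F \<Longrightarrow> tstar G k x \<le> ntab F \<and> orig (tstar G k x) = tstar F (orig k) x"
proof (induction x arbitrary: k)
  case Nil
  then show ?case by simp
next
  case (Cons s y)
  show ?case using Cons.IH[OF ttG_le[OF Cons.prems]] orig_step[OF Cons.prems] by simp
qed

lemma redir_j0: "redir j0 s0"
  unfolding redir_def using j0lt tdef s0ne s0free by simp

lemma reachG: "k < ntab G \<Longrightarrow> \<exists>x. tstar G k x = ntab F"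
proof -
  assume "k < ntab G"
  then have k: "k \<le> ntab F" unfolding G_simps by simp
  obtain x where x: "tstar F (orig k) x = j0" using j0R orig_lt[OF k] unfolding Rset_def by blast
  let ?k = "tstar G k x"
  have o: "orig ?k = j0" using orig_tstar[OF k] x by simp
  have "tstar G k (x @ [s0]) = ttab G ?k s0" by (simp add: tstar_append)
  also have "\<dots> = ntab F" unfolding G_simps using o redir_j0 by simp
  finally show ?thesis by blast
qed

lemma regG: "regular \<mu> G"
  unfolding regular_def
proof (rule ex1I[of _ pi'])
  show "stationary \<mu> G pi'" by (rule stat_G)
  fix p assume "stationary \<mu> G p"
  then show "p = pi'" using uniq_stat[OF ct_G pos sum1, of "ntab F"] reachG stat_G
    unfolding G_simps(1) by (metis G_simps(1) lessI)
qed

lemma statG: "statdist \<mu> G = pi'"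
proof -
  have u: "\<exists>!p. stationary \<mu> G p" using regG unfolding regular_def .
  show ?thesis unfolding statdist_def
  proof (rule the_equality)
    show "stationary \<mu> G pi'" by (rule stat_G)
    fix p assume "stationary \<mu> G p"
    then show "p = pi'" using u stat_G by blast
  qed
qed

definition delta :: real where
  "delta = (\<Sum>s\<in>UNIV. if hd (ftab F t s) = a then \<mu> s else 0)"

lemma len_contr: "real (length (contr (ftab F t s))) * \<mu> s =
   real (length (ftab F t s)) * \<mu> s - (if hd (ftab F t s) = a then \<mu> s else 0)"
proof (cases "hd (ftab F t s) = a")
  case True
  then obtain w where w: "ftab F t s = a # (\<not>b) # w" using cw_a by blast
  show ?thesis unfolding w contr_a by (simp add: algebra_simps)
next
  case False
  then have "contr (ftab F t s) = ftab F t s" using contr_na cw_ne by blast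
  then show ?thesis using False by simp
qed

lemma avglenG: "avglen \<mu> G = avglen \<mu> F - phi * delta"
proof -
  define l where "l k = (\<Sum>s\<in>UNIV. real (length (ftab F k s)) * \<mu> s)" for k
  have lG: "(\<Sum>s\<in>UNIV. real (length (ftab G k s)) * \<mu> s) = l k" if "k < ntab F" for k
    unfolding l_def G_simps using that by simp
  have lnt: "(\<Sum>s\<in>UNIV. real (length (ftab G (ntab F) s)) * \<mu> s) = l t - delta"
    unfolding G_simps l_def delta_def using len_contr by (simp add: sum_subtractf)
  have "avglen \<mu> G = (\<Sum>i<Suc (ntab F). pi' i * (\<Sum>s\<in>UNIV. real (length (ftab G i s)) * \<mu> s))"
    unfolding avglen_def statG G_simps(1) ..
  also have "\<dots> = (\<Sum>i<ntab F. (statdist \<mu> F i - (if i = t then phi else 0)) * l i) + phi * (l t - delta)"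
    using lG lnt pi'_lt pi'_nt by simp
  also have "\<dots> = (\<Sum>i<ntab F. statdist \<mu> F i * l i) - phi * delta"
    unfolding sum_minus_t by (simp add: algebra_simps)
  also have "(\<Sum>i<ntab F. statdist \<mu> F i * l i) = avglen \<mu> F"
    unfolding avglen_def l_def ..
  finally show ?thesis .
qed

lemma phi_pos: "0 < phi"
proof -
  have "(if redir j0 s0 then \<mu> s0 else 0) \<le> (\<Sum>s\<in>UNIV. if redir j0 s then \<mu> s else 0)"
    by (rule member_le_sum) (auto intro: less_imp_le pos)
  then have "\<mu> s0 \<le> rho j0" unfolding rho_def using redir_j0 by simp
  then have r: "0 < rho j0" using pos[of s0] by simp
  have "statdist \<mu> F j0 * rho j0 \<le> phi"
    unfolding phi_def using j0lt
    by (intro member_le_sum) (auto intro!: mult_nonneg_nonneg statdist_nn rho_nn)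
  moreover have "0 < statdist \<mu> F j0 * rho j0" using statdist_pos[OF j0R] r by simp
  ultimately show ?thesis by simp
qed

lemma delta_pos: "0 < delta"
proof -
  obtain s where s: "hd (ftab F t s) = a" using exists_a by blast
  have "(if hd (ftab F t s) = a then \<mu> s else 0) \<le> (\<Sum>s\<in>UNIV. if hd (ftab F t s) = a then \<mu> s else 0)"
    by (rule member_le_sum) (auto intro: less_imp_le pos)
  then have "\<mu> s \<le> delta" unfolding delta_def using s by simp
  then show ?thesis using pos[of s] by simp
qed

lemma no_opt: "F \<in> Fopt \<mu> \<Longrightarrow> False"
proof -
  assume "F \<in> Fopt \<mu>"
  moreover have "G \<in> F0 \<mu>" unfolding F0_def using ct_G regG ext_G td_G by simp
  ultimately have "avglen \<mu> F \<le> avglen \<mu> G" unfolding Fopt_def by blast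
  moreover have "0 < phi * delta" using phi_pos delta_pos by simp
  ultimately show False using avglenG by simp
qed

end

theorem lemma24:
  fixes \<mu> :: "'a::finite \<Rightarrow> real" and F :: "'a ctuple"
  assumes "card (UNIV :: 'a set) \<ge> 2"
    and "\<And>s. 0 < \<mu> s \<and> \<mu> s \<le> 1"
    and "(\<Sum>s\<in>UNIV. \<mu> s) = 1"
    and "F \<in> Fopt \<mu> \<inter> F2 \<mu>"
  shows "\<exists>i\<in>Rset F. card (Pset F 2 i []) = 4"
proof (rule ccontr)
  assume H: "\<not> (\<exists>i\<in>Rset F. card (Pset F 2 i []) = 4)"
  have opt: "F \<in> Fopt \<mu>" and f2: "F \<in> F2 \<mu>" using assms(4) by auto
  have f0: "F \<in> F0 \<mu>" using opt unfolding Fopt_def by simp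
  interpret cs: code_setting \<mu> F
    using assms(1-3) f0 f2 unfolding F0_def F2_def by unfold_locales auto
  obtain j0 where j0: "j0 \<in> Rset F" using cs.R_nonempty by blast
  have j0lt: "j0 < ntab F" using j0 unfolding Rset_def by simp
  obtain s0 where s0: "ftab F j0 s0 \<noteq> []" "Pbar F 2 j0 (ftab F j0 s0) = {}"
    using cs.free_codeword[OF j0lt] by blast
  define t where "t = ttab F j0 s0"
  have tR: "t \<in> Rset F" unfolding t_def using cs.R_closed[OF j0] .
  have tlt: "t < ntab F" using tR unfolding Rset_def by simp
  have "card (Pset F 2 t []) \<noteq> 4" using H tR by blast
  moreover have "3 \<le> card (Pset F 2 t [])" using cs.ge3[OF tlt] .
  moreover have "card (Pset F 2 t []) \<le> 4" by (rule card_Pset2_le)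
  ultimately have c3: "card (Pset F 2 t []) = 3" by simp
  obtain a b where ab: "[a,b] \<notin> Pset F 2 t []" "\<forall>c. length c = 2 \<and> c \<noteq> [a,b] \<longrightarrow> c \<in> Pset F 2 t []"
    using cs.missing_pattern[OF tlt c3] by blast
  interpret cn: constr \<mu> F j0 s0 t a b
    using j0 s0 t_def c3 ab by unfold_locales auto
  show False using cn.no_opt[OF opt] .
qed

end
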